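(* Let $\gamma>0$, $v\in[0,1]^N$ and $r\in[0,1]^N$, and let $$q\in\arg\max_{\rho\in\Delta(\mathcal{S})}\;\mathbb{E}_{S\sim\rho}[R(S,v,r)]-\frac{(K+1)^4}{\gamma}\sum_{i=1}^N\log\frac{1}{w_i(\rho)}.$$ Then $$\max_{S^\star\in\mathcal{S}}R(S^\star,v,r)-\mathbb{E}_{S\sim q}[R(S,v,r)]\le\frac{N(K+1)^4}{\gamma},$$ and for every $S\in\mathcal{S}$, $$\sum_{i\in S}\frac{1}{w_i(q)}\le N+\frac{\gamma}{(K+1)^4}\Big(\max_{S^\star\in\mathcal{S}}R(S^\star,v,r)-R(S,v,r)\Big).$$
   Context: $N\ge K\ge1$ are integers and $\mathcal{S}$ is the collection of subsets $S\subseteq[N]$ with $1\le|S|\le K$; $\Delta(\mathcal{S})$ is the set of probability distributions on $\mathcal{S}$. For $S\in\mathcal{S}$, $v,r\in[0,1]^N$, $R(S,v,r)=\frac{\sum_{i\in S}r_iv_i}{1+\sum_{i\in S}v_i}$. For $\rho\in\Delta(\mathcal{S})$, $w_i(\rho)=\sum_{S\in\mathcal{S}:\,i\in S}\rho(S)$ (the probability that item $i$ belongs to a set drawn from $\rho$). *)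

theory Defs
  imports "HOL-Analysis.Analysis"
begin

definition Sets :: "nat \<Rightarrow> nat \<Rightarrow> nat set set" where
  "Sets N K = {S. S \<subseteq> {1..N} \<and> 1 \<le> card S \<and> card S \<le> K}"

definition Rev :: "nat set \<Rightarrow> (nat \<Rightarrow> real) \<Rightarrow> (nat \<Rightarrow> real) \<Rightarrow> real" where
  "Rev S v r = (\<Sum>i\<in>S. r i * v i) / (1 + (\<Sum>i\<in>S. v i))"

definition is_dist :: "nat \<Rightarrow> nat \<Rightarrow> (nat set \<Rightarrow> real) \<Rightarrow> bool" where
  "is_dist N K \<rho> \<longleftrightarrow> (\<forall>S. 0 \<le> \<rho> S) \<and> (\<forall>S. S \<notin> Sets N K \<longrightarrow> \<rho> S = 0)
      \<and> (\<Sum>S\<in>Sets N K. \<rho> S) = 1"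

definition wprob :: "nat \<Rightarrow> nat \<Rightarrow> (nat set \<Rightarrow> real) \<Rightarrow> nat \<Rightarrow> real" where
  "wprob N K \<rho> i = (\<Sum>S\<in>{S\<in>Sets N K. i \<in> S}. \<rho> S)"

definition exp_rev :: "nat \<Rightarrow> nat \<Rightarrow> (nat set \<Rightarrow> real) \<Rightarrow> (nat \<Rightarrow> real) \<Rightarrow> (nat \<Rightarrow> real) \<Rightarrow> real" where
  "exp_rev N K \<rho> v r = (\<Sum>S\<in>Sets N K. \<rho> S * Rev S v r)"

text \<open>Regularised objective, valued in the extended reals: if some w_i(rho) = 0
  then log(1/w_i(rho)) = +infinity and the objective is -infinity.\<close>
definition objective :: "nat \<Rightarrow> nat \<Rightarrow> real \<Rightarrow> (nat \<Rightarrow> real) \<Rightarrow> (nat \<Rightarrow> real) \<Rightarrow> (nat set \<Rightarrow> real) \<Rightarrow> ereal" where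
  "objective N K \<gamma> v r \<rho> =
     (if \<forall>i\<in>{1..N}. 0 < wprob N K \<rho> i
      then ereal (exp_rev N K \<rho> v r
                  - (real (K+1))^4 / \<gamma> * (\<Sum>i=1..N. ln (1 / wprob N K \<rho> i)))
      else -\<infinity>)"

end

theory Submission
  imports Defs
begin

theorem lemma4:
  fixes N K :: nat and \<gamma> :: real and v r :: "nat \<Rightarrow> real" and q :: "nat set \<Rightarrow> real"
  assumes "1 \<le> K" and "K \<le> N"
    and "0 < \<gamma>"
    and "\<forall>i\<in>{1..N}. 0 \<le> v i \<and> v i \<le> 1"
    and "\<forall>i\<in>{1..N}. 0 \<le> r i \<and> r i \<le> 1"
    and "is_dist N K q"
    and "\<forall>\<rho>. is_dist N K \<rho> \<longrightarrow> objective N K \<gamma> v r \<rho> \<le> objective N K \<gamma> v r q"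
  shows "(MAX S\<in>Sets N K. Rev S v r) - exp_rev N K q v r \<le> real N * (real (K+1))^4 / \<gamma>
    \<and> (\<forall>S\<in>Sets N K. (\<Sum>i\<in>S. 1 / wprob N K q i)
           \<le> real N + \<gamma> / (real (K+1))^4 * ((MAX S'\<in>Sets N K. Rev S' v r) - Rev S v r))"
proof -
  define Ss where "Ss = Sets N K"
  have finS: "finite Ss"
    by (rule finite_subset[of _ "Pow {1..N}"]) (auto simp: Ss_def Sets_def)
  have sing: "{i} \<in> Ss" if "i \<in> {1..N}" for i
    using that assms(1) by (auto simp: Ss_def Sets_def)
  have neS: "Ss \<noteq> {}" using sing[of 1] assms(1,2) by auto
  define c where "c = (real (K+1))^4 / \<gamma>"
  have cpos: "c > 0" using assms(3) by (simp add: c_def)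
  define W where "W = wprob N K q"
  have qnn: "\<And>T. 0 \<le> q T" and q0: "\<And>T. T \<notin> Ss \<Longrightarrow> q T = 0" and q1: "(\<Sum>T\<in>Ss. q T) = 1"
    using assms(6) by (auto simp: is_dist_def Ss_def)
  have Wpos: "\<forall>i\<in>{1..N}. 0 < W i"
  proof -
    define u where "u = (\<lambda>T. if T \<in> Ss then 1 / real (card Ss) else 0)"
    have cardpos: "card Ss > 0" using finS neS by (simp add: card_gt_0_iff)
    have ud: "is_dist N K u"
      unfolding is_dist_def using cardpos by (auto simp: u_def Ss_def)
    have "0 < wprob N K u i" if "i \<in> {1..N}" for i
    proof -
      have f: "finite {T \<in> Ss. i \<in> T}" using finS by simp
      have "{i} \<in> {T \<in> Ss. i \<in> T}" using sing[OF that] by simp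
      hence "card {T \<in> Ss. i \<in> T} > 0" using f by (auto simp: card_gt_0_iff)
      moreover have "wprob N K u i = real (card {T \<in> Ss. i \<in> T}) / real (card Ss)"
        unfolding wprob_def Ss_def[symmetric] by (simp add: u_def)
      ultimately show ?thesis using cardpos by simp
    qed
    hence "objective N K \<gamma> v r u \<noteq> -\<infinity>" by (simp add: objective_def)
    moreover have "objective N K \<gamma> v r u \<le> objective N K \<gamma> v r q" using assms(7) ud by blast
    ultimately have "objective N K \<gamma> v r q \<noteq> -\<infinity>" by auto
    thus ?thesis by (auto simp: objective_def W_def split: if_splits)
  qed
  have key: "Rev S v r - exp_rev N K q v r \<le> c * (real N - (\<Sum>i\<in>S. 1 / W i))" if SS: "S \<in> Ss" for S
  proof -
    have Ssub: "S \<subseteq> {1..N}" using SS by (auto simp: Ss_def Sets_def)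
    define ch where "ch i = (if i \<in> S then 1 else 0::real)" for i
    define \<rho> where "\<rho> t = (\<lambda>T. (1-t) * q T + t * (if T = S then 1 else 0))" for t :: real
    have w\<rho>: "wprob N K (\<rho> t) i = (1-t) * W i + t * ch i" for t i
    proof -
      have "wprob N K (\<rho> t) i = (1-t) * (\<Sum>T\<in>{T \<in> Ss. i \<in> T}. q T)
          + t * (\<Sum>T\<in>{T \<in> Ss. i \<in> T}. (if T = S then 1 else 0))"
        unfolding wprob_def Ss_def[symmetric] \<rho>_def
        by (simp add: sum.distrib sum_distrib_left)
      also have "(\<Sum>T\<in>{T \<in> Ss. i \<in> T}. (if T = S then 1 else 0)) = ch i"
        using finS SS by (simp add: ch_def)
      finally show ?thesis by (simp add: W_def wprob_def Ss_def)
    qed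
    have e\<rho>: "exp_rev N K (\<rho> t) v r = (1-t) * exp_rev N K q v r + t * Rev S v r" for t
    proof -
      have "exp_rev N K (\<rho> t) v r = (1-t) * (\<Sum>T\<in>Ss. q T * Rev T v r)
          + t * (\<Sum>T\<in>Ss. (if T = S then Rev T v r else 0))"
      proof -
        have "exp_rev N K (\<rho> t) v r = (\<Sum>T\<in>Ss. (1-t) * (q T * Rev T v r) + t * (if T = S then Rev T v r else 0))"
          unfolding exp_rev_def Ss_def[symmetric] \<rho>_def
          by (intro sum.cong) (auto simp: algebra_simps)
        thus ?thesis by (simp add: sum.distrib sum_distrib_left)
      qed
      also have "(\<Sum>T\<in>Ss. (if T = S then Rev T v r else 0)) = Rev S v r"
        using finS SS by simp
      finally show ?thesis by (simp add: exp_rev_def Ss_def)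
    qed
    have dist\<rho>: "is_dist N K (\<rho> t)" if "0 \<le> t" "t \<le> 1" for t
    proof -
      have "(\<Sum>T\<in>Ss. \<rho> t T) = (1-t) * (\<Sum>T\<in>Ss. q T) + t * (\<Sum>T\<in>Ss. (if T = S then 1 else 0))"
        unfolding \<rho>_def by (simp add: sum.distrib sum_distrib_left)
      also have "\<dots> = 1" using q1 finS SS by simp
      finally show ?thesis unfolding is_dist_def Ss_def[symmetric]
        using that qnn q0 SS by (auto simp: \<rho>_def)
    qed
    have ineq: "Rev S v r - exp_rev N K q v r \<le> c * (\<Sum>i=1..N. (W i - ch i) / ((1-t) * W i + t * ch i))"
      if t: "0 < t" "t < 1" for t
    proof -
      define w' where "w' i = (1-t) * W i + t * ch i" for i
      have chnn: "0 \<le> ch i" for i by (simp add: ch_def)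
      have wp: "\<forall>i\<in>{1..N}. 0 < w' i"
      proof
        fix i assume "i \<in> {1..N}"
        hence "0 < (1-t) * W i" using Wpos t by simp
        moreover have "0 \<le> t * ch i" using t chnn by simp
        ultimately show "0 < w' i" by (simp add: w'_def)
      qed
      have "objective N K \<gamma> v r (\<rho> t) \<le> objective N K \<gamma> v r q"
        using assms(7) dist\<rho>[of t] t by simp
      hence A: "exp_rev N K (\<rho> t) v r - c * (\<Sum>i=1..N. ln (1 / w' i))
          \<le> exp_rev N K q v r - c * (\<Sum>i=1..N. ln (1 / W i))"
        using wp Wpos unfolding objective_def c_def w'_def w\<rho> W_def by simp
      have B: "(\<Sum>i=1..N. ln (1 / w' i)) - (\<Sum>i=1..N. ln (1 / W i))
          \<le> t * (\<Sum>i=1..N. (W i - ch i) / w' i)"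
      proof -
        have "ln (1 / w' i) - ln (1 / W i) \<le> t * ((W i - ch i) / w' i)" if i: "i \<in> {1..N}" for i
        proof -
          have p1: "0 < w' i" "0 < W i" using wp Wpos i by auto
          have "ln (1 / w' i) - ln (1 / W i) = ln (W i / w' i)"
            using p1 by (simp add: ln_div)
          also have "\<dots> \<le> W i / w' i - 1" using p1 by (intro ln_le_minus_one) simp
          also have "\<dots> = t * ((W i - ch i) / w' i)"
            using p1 by (simp add: field_simps w'_def)
          finally show ?thesis .
        qed
        hence "(\<Sum>i=1..N. ln (1 / w' i) - ln (1 / W i)) \<le> (\<Sum>i=1..N. t * ((W i - ch i) / w' i))"
          by (rule sum_mono)
        thus ?thesis by (simp add: sum_subtractf sum_distrib_left)
      qed
      have "t * (Rev S v r - exp_rev N K q v r) \<le> c * ((\<Sum>i=1..N. ln (1 / w' i)) - (\<Sum>i=1..N. ln (1 / W i)))"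
        using A e\<rho>[of t] by (simp add: algebra_simps)
      also have "\<dots> \<le> c * (t * (\<Sum>i=1..N. (W i - ch i) / w' i))"
        using B cpos by (intro mult_left_mono) auto
      finally have "t * (Rev S v r - exp_rev N K q v r) \<le> t * (c * (\<Sum>i=1..N. (W i - ch i) / w' i))"
        by (simp add: algebra_simps)
      hence "Rev S v r - exp_rev N K q v r \<le> c * (\<Sum>i=1..N. (W i - ch i) / w' i)"
        using t by simp
      thus ?thesis by (simp add: w'_def)
    qed
    have lim: "((\<lambda>t. c * (\<Sum>i=1..N. (W i - ch i) / ((1-t) * W i + t * ch i)))
        \<longlongrightarrow> c * (\<Sum>i=1..N. (W i - ch i) / ((1-0) * W i + 0 * ch i))) (at_right 0)"
      using Wpos by (intro tendsto_intros) (metis less_irrefl mult_1 mult_zero_left add_0_right diff_zero)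
    have ev: "eventually (\<lambda>t. Rev S v r - exp_rev N K q v r
        \<le> c * (\<Sum>i=1..N. (W i - ch i) / ((1-t) * W i + t * ch i))) (at_right (0::real))"
    proof (rule eventually_mono[OF eventually_at_right_real[of "0::real" 1]])
      fix t :: real assume "t \<in> {0<..<1}"
      thus "Rev S v r - exp_rev N K q v r \<le> c * (\<Sum>i=1..N. (W i - ch i) / ((1-t) * W i + t * ch i))"
        by (intro ineq) auto
    qed simp
    have le: "Rev S v r - exp_rev N K q v r \<le> c * (\<Sum>i=1..N. (W i - ch i) / ((1-0) * W i + 0 * ch i))"
      by (rule tendsto_lowerbound[OF lim ev]) simp
    have "(\<Sum>i=1..N. (W i - ch i) / ((1-0) * W i + 0 * ch i)) = (\<Sum>i=1..N. 1 - ch i / W i)"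
    proof (intro sum.cong refl)
      fix i assume "i \<in> {1..N}"
      hence "W i \<noteq> 0" using Wpos by force
      thus "(W i - ch i) / ((1-0) * W i + 0 * ch i) = 1 - ch i / W i" by (simp add: field_simps)
    qed
    also have "\<dots> = real N - (\<Sum>i=1..N. (if i \<in> S then 1 / W i else 0))"
      by (simp add: sum_subtractf ch_def, intro sum.cong) auto
    also have "(\<Sum>i=1..N. (if i \<in> S then 1 / W i else 0)) = (\<Sum>i\<in>S. 1 / W i)"
    proof -
      have "(\<Sum>i\<in>{1..N}. (if i \<in> S then 1 / W i else 0)) = (\<Sum>i\<in>{1..N} \<inter> S. 1 / W i)"
        by (rule sym, rule sum.inter_restrict) simp
      also have "{1..N} \<inter> S = S" using Ssub by blast
      finally show ?thesis .
    qed
    finally show ?thesis using le by simp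
  qed
  obtain Sm where Sm: "Sm \<in> Ss" "Rev Sm v r = (MAX S\<in>Ss. Rev S v r)"
    using finS neS by (metis (no_types, lifting) Max_in finite_imageI image_iff image_is_empty)
  have Rle: "Rev S v r \<le> (MAX S\<in>Ss. Rev S v r)" if "S \<in> Ss" for S
    using finS that by simp
  have ERle: "exp_rev N K q v r \<le> (MAX S\<in>Ss. Rev S v r)"
  proof -
    have "exp_rev N K q v r \<le> (\<Sum>T\<in>Ss. q T * (MAX S\<in>Ss. Rev S v r))"
      unfolding exp_rev_def Ss_def[symmetric]
      by (intro sum_mono mult_left_mono Rle qnn)
    also have "\<dots> = (MAX S\<in>Ss. Rev S v r)" using q1 by (simp add: sum_distrib_right[symmetric])
    finally show ?thesis .
  qed
  have invnn: "0 \<le> (\<Sum>i\<in>S. 1 / W i)" if "S \<in> Ss" for S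
  proof -
    have "S \<subseteq> {1..N}" using that by (auto simp: Ss_def Sets_def)
    thus ?thesis using Wpos by (intro sum_nonneg) (metis less_le subsetD divide_nonneg_nonneg zero_le_one)
  qed
  have part1: "(MAX S\<in>Ss. Rev S v r) - exp_rev N K q v r \<le> real N * (real (K+1))^4 / \<gamma>"
  proof -
    have "(MAX S\<in>Ss. Rev S v r) - exp_rev N K q v r \<le> c * (real N - (\<Sum>i\<in>Sm. 1 / W i))"
      using key[OF Sm(1)] Sm(2) by simp
    also have "\<dots> \<le> c * real N" using cpos invnn[OF Sm(1)] by (simp add: mult_left_mono)
    finally show ?thesis by (simp add: c_def mult.commute)
  qed
  have part2: "(\<Sum>i\<in>S. 1 / W i) \<le> real N + \<gamma> / (real (K+1))^4 * ((MAX S'\<in>Ss. Rev S' v r) - Rev S v r)"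
    if "S \<in> Ss" for S
  proof -
    have "c * (\<Sum>i\<in>S. 1 / W i) \<le> c * real N + ((MAX S'\<in>Ss. Rev S' v r) - Rev S v r)"
      using key[OF that] ERle by (simp add: algebra_simps)
    hence "(\<Sum>i\<in>S. 1 / W i) \<le> (c * real N + ((MAX S'\<in>Ss. Rev S' v r) - Rev S v r)) / c"
      using cpos by (simp add: field_simps)
    also have "\<dots> = real N + \<gamma> / (real (K+1))^4 * ((MAX S'\<in>Ss. Rev S' v r) - Rev S v r)"
      using cpos assms(3) by (simp add: c_def field_simps)
    finally show ?thesis .
  qed
  show ?thesis using part1 part2 by (simp add: Ss_def W_def)
qed

end
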